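(* Let $V$ be a finite set and $\mathcal{F}\subseteq 2^V$ a minimal hereditary family with $\delta(\mathcal{F})\ge 12$. Then every $4$-element set $Q\in\mathcal{F}$ contains at most three mini-weight vertices.
   Context: A family $\mathcal{F}\subseteq 2^V$ is hereditary if $F'\subseteq F\in\mathcal{F}$ implies $F'\in\mathcal{F}$. For $x\in V$: $\mathcal{F}(x)=\{F\setminus\{x\}: x\in F\in\mathcal{F}\}$, $d_{\mathcal{F}}(x)=|\mathcal{F}(x)|$, $\delta(\mathcal{F})=\min_{x\in V}d_{\mathcal{F}}(x)$. A set $F\in\mathcal{F}$ is maximal if no other member strictly contains it; a hereditary $\mathcal{F}$ with $\delta(\mathcal{F})\ge 12$ is minimal if $\delta(\mathcal{F}\setminus\{F\})\le 11$ for every maximal $F\in\mathcal{F}$. $f_i(x)$ denotes the number of $i$-element sets in $\mathcal{F}(x)$. A vertex $x$ is mini-weight if $f_1(x)=4$, $f_2(x)=5$, $f_3(x)=2$. *)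

theory Defs
  imports Main
begin

definition hereditary :: "'a set set \<Rightarrow> bool" where
  "hereditary \<F> \<longleftrightarrow> (\<forall>F F'. F \<in> \<F> \<and> F' \<subseteq> F \<longrightarrow> F' \<in> \<F>)"

definition link :: "'a set set \<Rightarrow> 'a \<Rightarrow> 'a set set" where
  "link \<F> x = {F - {x} | F. x \<in> F \<and> F \<in> \<F>}"

definition deg :: "'a set set \<Rightarrow> 'a \<Rightarrow> nat" where
  "deg \<F> x = card (link \<F> x)"

definition min_deg :: "'a set \<Rightarrow> 'a set set \<Rightarrow> nat" where
  "min_deg V \<F> = Min ((\<lambda>x. deg \<F> x) ` V)"

definition maximal_set :: "'a set set \<Rightarrow> 'a set \<Rightarrow> bool" where
  "maximal_set \<F> F \<longleftrightarrow> F \<in> \<F> \<and> (\<forall>G\<in>\<F>. F \<subseteq> G \<longrightarrow> G = F)"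

definition minimal_family :: "'a set \<Rightarrow> 'a set set \<Rightarrow> bool" where
  "minimal_family V \<F> \<longleftrightarrow> hereditary \<F> \<and> min_deg V \<F> \<ge> 12 \<and>
     (\<forall>F. maximal_set \<F> F \<longrightarrow> min_deg V (\<F> - {F}) \<le> 11)"

definition fcount :: "'a set set \<Rightarrow> 'a \<Rightarrow> nat \<Rightarrow> nat" where
  "fcount \<F> x i = card {S \<in> link \<F> x. card S = i}"

definition mini_weight :: "'a set set \<Rightarrow> 'a \<Rightarrow> bool" where
  "mini_weight \<F> x \<longleftrightarrow> fcount \<F> x 1 = 4 \<and> fcount \<F> x 2 = 5 \<and> fcount \<F> x 3 = 2"

end

theory Submission
  imports Defs
begin

lemma link_memI: "x \<in> A \<Longrightarrow> A \<in> F \<Longrightarrow> A - {x} \<in> link F x"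
  unfolding link_def by blast

lemma single_link:
  assumes h: "hereditary F" and "A \<in> F" "x \<in> A" "t \<in> A" "t \<noteq> x"
  shows "{t} \<in> link F x"
proof -
  have "{x,t} \<subseteq> A" using assms by simp
  hence "{x,t} \<in> F" using h assms(2) unfolding hereditary_def by blast
  moreover have "{t} = {x,t} - {x}" using assms(5) by auto
  ultimately show ?thesis using link_memI[of x "{x,t}" F] by simp
qed

lemma U_lemma:
  assumes h: "hereditary F" and Q: "Q \<in> F" "card Q = 4" "p \<in> Q"
    and f3: "fcount F p 3 = 2"
    and W1: "W1 \<in> F" "p \<in> W1" "card W1 = 4" "W1 \<noteq> Q"
    and W2: "W2 \<in> F" "p \<in> W2" "card W2 = 4" "W2 \<noteq> Q"
    and ne: "W1 \<noteq> W2"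
  shows False
proof -
  let ?L = "{S \<in> link F p. card S = 3}"
  have fin: "finite ?L" using f3 unfolding fcount_def by (intro card_ge_0_finite) simp
  have c: "\<And>A. card A = 4 \<Longrightarrow> p \<in> A \<Longrightarrow> card (A - {p}) = 3"
  proof -
    fix A assume "card A = 4" "p \<in> A"
    moreover hence "finite A" by (intro card_ge_0_finite) simp
    ultimately show "card (A - {p}) = 3" by (simp add: card_Diff_singleton)
  qed
  have sub: "{Q-{p}, W1-{p}, W2-{p}} \<subseteq> ?L"
    using link_memI c Q W1 W2 by auto
  have inj: "\<And>A B. p \<in> A \<Longrightarrow> p \<in> B \<Longrightarrow> A - {p} = B - {p} \<Longrightarrow> A = B"
    by (metis insert_Diff)
  have d1: "Q-{p} \<noteq> W1-{p}" using inj Q W1 by metis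
  have d2: "Q-{p} \<noteq> W2-{p}" using inj Q W2 by metis
  have d3: "W1-{p} \<noteq> W2-{p}" using inj ne W1 W2 by metis
  have "card {Q-{p}, W1-{p}, W2-{p}} = 3" using d1 d2 d3 by simp
  moreover have "card {Q-{p}, W1-{p}, W2-{p}} \<le> card ?L" using card_mono[OF fin sub] .
  ultimately show False using f3 unfolding fcount_def by simp
qed

lemma E_lemma:
  assumes h: "hereditary F" and Q: "Q \<in> F" "card Q = 4" "x \<in> Q"
    and f1: "fcount F x 1 = 4" and f3: "fcount F x 3 = 2"
  shows "\<exists>W\<in>F. x \<in> W \<and> card W = 4 \<and> W \<noteq> Q \<and> 3 \<le> card (W \<inter> Q)"
proof -
  let ?L = "{S \<in> link F x. card S = 3}"
  have fin: "finite ?L" using f3 unfolding fcount_def by (intro card_ge_0_finite) simp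
  have "\<not> ?L \<subseteq> {Q - {x}}"
  proof
    assume "?L \<subseteq> {Q - {x}}"
    hence "card ?L \<le> card {Q - {x}}" by (intro card_mono) auto
    hence "card ?L \<le> 1" by simp
    thus False using f3 unfolding fcount_def by simp
  qed
  then obtain T where T: "T \<in> link F x" "card T = 3" "T \<noteq> Q - {x}" by auto
  then obtain W where W: "T = W - {x}" "x \<in> W" "W \<in> F" unfolding link_def by blast
  have finT: "finite T" using T(2) by (intro card_ge_0_finite) simp
  have WT: "W = insert x T" using W by auto
  have cW: "card W = 4" using WT finT T(2) W by simp
  have finW: "finite W" using WT finT by simp
  have finQ: "finite Q" using Q(2) by (intro card_ge_0_finite) simp
  have WQ: "W \<noteq> Q" using T(3) W(1) by auto
  let ?L1 = "{S \<in> link F x. card S = 1}"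
  have fin1: "finite ?L1" using f1 unfolding fcount_def by (intro card_ge_0_finite) simp
  have sub: "(\<lambda>q. {q}) ` (Q - {x}) \<union> (\<lambda>q. {q}) ` (W - Q) \<subseteq> ?L1"
    using single_link[OF h] Q W by auto
  have "card ((\<lambda>q. {q}) ` (Q - {x}) \<union> (\<lambda>q. {q}) ` (W - Q))
        = card ((\<lambda>q. {q}) ` ((Q - {x}) \<union> (W - Q)))" by (simp add: image_Un)
  also have "\<dots> = card ((Q - {x}) \<union> (W - Q))" by (intro card_image) (auto simp: inj_on_def)
  also have "\<dots> = card (Q - {x}) + card (W - Q)" using finQ finW by (intro card_Un_disjoint) auto
  also have "card (Q - {x}) = 3" using Q finQ by simp
  finally have "3 + card (W - Q) \<le> 4" using card_mono[OF fin1 sub] f1 unfolding fcount_def by simp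
  moreover have "card W = card (W \<inter> Q) + card (W - Q)"
    using finW by (rule card_Int_Diff)
  ultimately have "3 \<le> card (W \<inter> Q)" using cW by simp
  thus ?thesis using W cW WQ by blast
qed

theorem mainTheorem7:
  fixes V :: "'a set" and \<F> :: "'a set set" and Q :: "'a set"
  assumes "finite V"
    and "\<F> \<subseteq> Pow V"
    and "minimal_family V \<F>"
    and "Q \<in> \<F>" and "card Q = 4"
  shows "card {x \<in> Q. mini_weight \<F> x} \<le> 3"
proof (rule ccontr)
  assume a: "\<not> ?thesis"
  have h: "hereditary \<F>" using assms(3) unfolding minimal_family_def by simp
  have finQ: "finite Q" using assms(5) by (intro card_ge_0_finite) simp
  have "{x \<in> Q. mini_weight \<F> x} = Q"
    using a assms(5) finQ by (intro card_seteq) auto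
  hence mw: "\<And>x. x \<in> Q \<Longrightarrow> mini_weight \<F> x" by blast
  have E: "\<And>x. x \<in> Q \<Longrightarrow> \<exists>W\<in>\<F>. x \<in> W \<and> card W = 4 \<and> W \<noteq> Q \<and> 3 \<le> card (W \<inter> Q)"
    using E_lemma[OF h assms(4,5)] mw unfolding mini_weight_def by blast
  obtain a0 where "a0 \<in> Q" using assms(5) by fastforce
  then obtain Wa where Wa: "Wa \<in> \<F>" "a0 \<in> Wa" "card Wa = 4" "Wa \<noteq> Q" "3 \<le> card (Wa \<inter> Q)"
    using E by blast
  have finWa: "finite Wa" using Wa(3) by (intro card_ge_0_finite) simp
  obtain c where c: "c \<in> Q" "c \<notin> Wa"
  proof -
    have "\<not> Q \<subseteq> Wa"
    proof
      assume "Q \<subseteq> Wa"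
      hence "Q = Wa" using finWa Wa(3) assms(5) by (intro card_seteq) auto
      thus False using Wa(4) by simp
    qed
    thus ?thesis using that by blast
  qed
  then obtain Wc where Wc: "Wc \<in> \<F>" "c \<in> Wc" "card Wc = 4" "Wc \<noteq> Q" "3 \<le> card (Wc \<inter> Q)"
    using E by blast
  have "(Wa \<inter> Q) \<inter> (Wc \<inter> Q) \<noteq> {}"
  proof
    assume e: "(Wa \<inter> Q) \<inter> (Wc \<inter> Q) = {}"
    have "card ((Wa \<inter> Q) \<union> (Wc \<inter> Q)) = card (Wa \<inter> Q) + card (Wc \<inter> Q)"
      using finQ e by (intro card_Un_disjoint) auto
    moreover have "card ((Wa \<inter> Q) \<union> (Wc \<inter> Q)) \<le> card Q"
      using finQ by (intro card_mono) auto
    ultimately show False using Wa(5) Wc(5) assms(5) by simp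
  qed
  then obtain p where p: "p \<in> Q" "p \<in> Wa" "p \<in> Wc" by blast
  have "Wa \<noteq> Wc" using c Wc by blast
  thus False using U_lemma[OF h assms(4,5) p(1) _ Wa(1) p(2) Wa(3,4) Wc(1) p(3) Wc(3,4)]
    mw[OF p(1)] unfolding mini_weight_def by blast
qed

end
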